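(* Let $t$ be a positive rational number. If $G$ is a minimally $t$-tough split graph, then $G$ has a vertex of degree $\lceil 2t\rceil$.
   Context: All graphs are finite, simple and undirected. A graph is split if its vertex set can be partitioned into a clique and an independent set. $\omega(H)$ denotes the number of components of $H$. A cutset of $G$ is a vertex set $S$ with $G-S$ disconnected. For positive real $t$, $G$ is $t$-tough if $\omega(G-S)\le |S|/t$ for every cutset $S$; the toughness $\tau(G)$ is the largest such $t$, with $\tau(K_n)=\infty$ for all $n\ge1$. $G$ is minimally $t$-tough if $\tau(G)=t$ and $\tau(G-e)<t$ for every edge $e$ of $G$. *)

theory Defs
  imports Complex_Main "HOL-Library.Extended_Real"
begin

definition simple_graph :: "'a set \<Rightarrow> 'a set set \<Rightarrow> bool" where
  "simple_graph V E \<longleftrightarrow> finite V \<and> (\<forall>e\<in>E. e \<subseteq> V \<and> card e = 2)"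

definition reachable :: "'a set \<Rightarrow> 'a set set \<Rightarrow> 'a \<Rightarrow> 'a \<Rightarrow> bool" where
  "reachable V E x y \<longleftrightarrow> x \<in> V \<and> y \<in> V \<and>
     (\<lambda>u v. u \<in> V \<and> v \<in> V \<and> {u, v} \<in> E)\<^sup>*\<^sup>* x y"

definition components :: "'a set \<Rightarrow> 'a set set \<Rightarrow> 'a set set" where
  "components V E = (\<lambda>x. {y. reachable V E x y}) ` V"

definition num_components :: "'a set \<Rightarrow> 'a set set \<Rightarrow> nat" where
  "num_components V E = card (components V E)"

definition del_verts_V :: "'a set \<Rightarrow> 'a set \<Rightarrow> 'a set" where
  "del_verts_V V S = V - S"

definition del_verts_E :: "'a set set \<Rightarrow> 'a set \<Rightarrow> 'a set set" where
  "del_verts_E E S = {e \<in> E. e \<inter> S = {}}"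

definition connected_graph :: "'a set \<Rightarrow> 'a set set \<Rightarrow> bool" where
  "connected_graph V E \<longleftrightarrow> num_components V E \<le> 1"

definition cutset :: "'a set \<Rightarrow> 'a set set \<Rightarrow> 'a set \<Rightarrow> bool" where
  "cutset V E S \<longleftrightarrow> S \<subseteq> V \<and> \<not> connected_graph (del_verts_V V S) (del_verts_E E S)"

definition complete_graph :: "'a set \<Rightarrow> 'a set set \<Rightarrow> bool" where
  "complete_graph V E \<longleftrightarrow> (\<forall>x\<in>V. \<forall>y\<in>V. x \<noteq> y \<longrightarrow> {x, y} \<in> E)"

definition tough :: "'a set \<Rightarrow> 'a set set \<Rightarrow> real \<Rightarrow> bool" where
  "tough V E t \<longleftrightarrow> t > 0 \<and>
     (\<forall>S. cutset V E S \<longrightarrow> real (num_components (del_verts_V V S) (del_verts_E E S)) \<le> real (card S) / t)"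

definition toughness :: "'a set \<Rightarrow> 'a set set \<Rightarrow> ereal" where
  "toughness V E =
     (if complete_graph V E then \<infinity>
      else if \<exists>t. tough V E t then ereal (GREATEST t. tough V E t)
      else 0)"

definition minimally_tough :: "'a set \<Rightarrow> 'a set set \<Rightarrow> real \<Rightarrow> bool" where
  "minimally_tough V E t \<longleftrightarrow>
     toughness V E = ereal t \<and> (\<forall>e\<in>E. toughness V (E - {e}) < ereal t)"

definition split_graph :: "'a set \<Rightarrow> 'a set set \<Rightarrow> bool" where
  "split_graph V E \<longleftrightarrow> (\<exists>K I. K \<union> I = V \<and> K \<inter> I = {} \<and>
      (\<forall>x\<in>K. \<forall>y\<in>K. x \<noteq> y \<longrightarrow> {x, y} \<in> E) \<and>
      (\<forall>x\<in>I. \<forall>y\<in>I. {x, y} \<notin> E))"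

definition degree :: "'a set set \<Rightarrow> 'a \<Rightarrow> nat" where
  "degree E v = card {u. {v, u} \<in> E}"

end

theory Submission
  imports Defs
begin


lemma reach_sym:
  assumes "reachable V E x y" shows "reachable V E y x"
proof -
  let ?R = "\<lambda>u v. u \<in> V \<and> v \<in> V \<and> {u, v} \<in> E"
  have "?R\<^sup>*\<^sup>* x y" using assms unfolding reachable_def by blast
  then have "?R\<^sup>*\<^sup>* y x"
  proof (induction rule: rtranclp_induct)
    case base then show ?case by simp
  next
    case (step a b)
    then have "?R b a" by (simp add: insert_commute)
    then show ?case using converse_rtranclp_into_rtranclp[of ?R b a x] step.IH by blast
  qed
  then show ?thesis using assms unfolding reachable_def by blast
qed

lemma reach_trans:
  assumes "reachable V E x y" "reachable V E y z" shows "reachable V E x z"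
  using assms unfolding reachable_def by (meson rtranclp_trans)

lemma reach_refl: "x \<in> V \<Longrightarrow> reachable V E x x"
  unfolding reachable_def by simp

lemma reach_edge: "x \<in> V \<Longrightarrow> y \<in> V \<Longrightarrow> {x,y} \<in> E \<Longrightarrow> reachable V E x y"
  unfolding reachable_def by (simp add: r_into_rtranclp)

lemma isolated_reach:
  assumes "\<forall>z\<in>V. z \<noteq> w \<longrightarrow> {w,z} \<notin> E" "reachable V E w z" shows "z = w"
proof -
  let ?R = "\<lambda>u v. u \<in> V \<and> v \<in> V \<and> {u, v} \<in> E"
  have "?R\<^sup>*\<^sup>* w z" using assms unfolding reachable_def by blast
  then show ?thesis
  proof (induction rule: rtranclp_induct)
    case base then show ?case by simp
  next
    case (step a b) then show ?case using assms(1) by blast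
  qed
qed

lemma comp_lower:
  assumes "finite V" "R \<subseteq> V" "\<forall>a\<in>R. \<forall>b\<in>R. reachable V E a b \<longrightarrow> a = b"
  shows "card R \<le> num_components V E"
proof -
  let ?f = "\<lambda>x. {y. reachable V E x y}"
  have inj: "inj_on ?f R"
  proof (rule inj_onI)
    fix a b assume ab: "a \<in> R" "b \<in> R" "?f a = ?f b"
    have "reachable V E b b" using ab assms(2) by (intro reach_refl) auto
    then have "b \<in> ?f b" by simp
    then have "reachable V E a b" using ab(3) by (metis mem_Collect_eq)
    then show "a = b" using ab assms(3) by blast
  qed
  have "card R = card (?f ` R)" using inj by (simp add: card_image)
  also have "\<dots> \<le> card (?f ` V)" using assms by (intro card_mono) auto
  finally show ?thesis unfolding num_components_def components_def .
qed

lemma comp_upper: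
  assumes "finite A" "\<forall>v\<in>V. \<exists>a\<in>A. reachable V E v a"
  shows "num_components V E \<le> card A"
proof -
  let ?f = "\<lambda>x. {y. reachable V E x y}"
  have "components V E \<subseteq> ?f ` A"
  proof
    fix c assume "c \<in> components V E"
    then obtain v where v: "v \<in> V" "c = ?f v" unfolding components_def by blast
    then obtain a where a: "a \<in> A" "reachable V E v a" using assms by blast
    have "?f v = ?f a"
    proof (intro set_eqI iffI)
      fix y assume "y \<in> ?f v"
      then show "y \<in> ?f a" using reach_trans[OF reach_sym[OF a(2)]] by simp
    next
      fix y assume "y \<in> ?f a"
      then show "y \<in> ?f v" using reach_trans[OF a(2)] by simp
    qed
    then show "c \<in> ?f ` A" using v a by blast
  qed
  then have "card (components V E) \<le> card (?f ` A)"
    using assms(1) by (intro card_mono) auto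
  also have "\<dots> \<le> card A" by (rule card_image_le[OF assms(1)])
  finally show ?thesis unfolding num_components_def .
qed

lemma edge_same:
  assumes "reachable V E x y"
  shows "num_components V (insert {x,y} E) = num_components V E"
proof -
  have eq: "reachable V (insert {x,y} E) a b = reachable V E a b" for a b
  proof
    assume h: "reachable V (insert {x,y} E) a b"
    let ?R = "\<lambda>u v. u \<in> V \<and> v \<in> V \<and> {u, v} \<in> insert {x,y} E"
    have "?R\<^sup>*\<^sup>* a b" "a \<in> V" using h unfolding reachable_def by blast+
    then show "reachable V E a b"
    proof (induction rule: rtranclp_induct)
      case base then show ?case by (simp add: reach_refl)
    next
      case (step c d)
      then have IH: "reachable V E a c" by blast
      show ?case
      proof (cases "{c,d} \<in> E")
        case True then show ?thesis using step reach_edge reach_trans IH by metis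
      next
        case False
        then have "{c,d} = {x,y}" using step by blast
        then have "(c = x \<and> d = y) \<or> (c = y \<and> d = x)" by (auto simp: doubleton_eq_iff)
        then show ?thesis using IH assms reach_sym reach_trans by metis
      qed
    qed
  next
    assume "reachable V E a b"
    then show "reachable V (insert {x,y} E) a b"
      unfolding reachable_def by (auto elim: rtranclp_mono[THEN predicate2D, rotated])
  qed
  have "reachable V (insert {x,y} E) = reachable V E" using eq by (intro ext) blast
  then show ?thesis unfolding num_components_def components_def by simp
qed

lemma sep_cut:
  assumes fin: "finite V" and W: "W \<subseteq> V" and R: "R \<subseteq> V - W" and c2: "2 \<le> card R"
    and iso: "\<forall>a\<in>R. a \<noteq> rr \<longrightarrow> (\<forall>z\<in>V - W. z \<noteq> a \<longrightarrow> {a,z} \<notin> E)"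
  shows "cutset V E W \<and> card R \<le> num_components (del_verts_V V W) (del_verts_E E W)"
proof -
  have iso': "\<forall>z\<in>V - W. z \<noteq> a \<longrightarrow> {a,z} \<notin> del_verts_E E W" if "a \<in> R" "a \<noteq> rr" for a
    using iso that unfolding del_verts_E_def by blast
  have sep: "\<forall>a\<in>R. \<forall>b\<in>R. reachable (V - W) (del_verts_E E W) a b \<longrightarrow> a = b"
  proof (intro ballI impI)
    fix a b assume ab: "a \<in> R" "b \<in> R" "reachable (V - W) (del_verts_E E W) a b"
    show "a = b"
    proof (cases "a = rr")
      case False
      then show ?thesis using isolated_reach[OF iso'[OF ab(1) False] ab(3)] by simp
    next
      case True
      show ?thesis
      proof (cases "b = rr")
        case True then show ?thesis using \<open>a = rr\<close> by simp
      next
        case False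
        then show ?thesis using isolated_reach[OF iso'[OF ab(2) False] reach_sym[OF ab(3)]] by simp
      qed
    qed
  qed
  have le: "card R \<le> num_components (V - W) (del_verts_E E W)"
    using comp_lower[OF _ R sep] fin by simp
  then have "cutset V E W"
    using c2 W unfolding cutset_def connected_graph_def del_verts_V_def by simp
  then show ?thesis using le unfolding del_verts_V_def by simp
qed

lemma sep_bound:
  assumes tough: "tough V E t" and fin: "finite V" and W: "W \<subseteq> V" and R: "R \<subseteq> V - W" and c2: "2 \<le> card R"
    and iso: "\<forall>a\<in>R. a \<noteq> rr \<longrightarrow> (\<forall>z\<in>V - W. z \<noteq> a \<longrightarrow> {a,z} \<notin> E)"
  shows "t * card R \<le> card W"
proof -
  have sc: "cutset V E W \<and> card R \<le> num_components (del_verts_V V W) (del_verts_E E W)"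
    by (rule sep_cut[OF fin W R c2 iso])
  let ?w = "real (num_components (del_verts_V V W) (del_verts_E E W))"
  have tpos: "t > 0" and le: "?w \<le> real (card W) / t"
    using tough sc unfolding tough_def by auto
  have "t * ?w \<le> card W" using le tpos by (simp add: field_simps)
  moreover have "t * card R \<le> t * ?w" using sc tpos by simp
  ultimately show ?thesis by linarith
qed

lemma tough_char:
  "tough V E t \<longleftrightarrow> t > 0 \<and> (\<forall>S. cutset V E S \<longrightarrow>
     t \<le> real (card S) / real (num_components (del_verts_V V S) (del_verts_E E S)))"
proof -
  have "real (num_components (del_verts_V V S) (del_verts_E E S)) \<le> real (card S) / t \<longleftrightarrow>
        t \<le> real (card S) / real (num_components (del_verts_V V S) (del_verts_E E S))"
    if "cutset V E S" "t > 0" for S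
  proof -
    have "num_components (del_verts_V V S) (del_verts_E E S) > 1"
      using that unfolding cutset_def connected_graph_def by simp
    then have p: "real (num_components (del_verts_V V S) (del_verts_E E S)) > 0" by simp
    show ?thesis using p that(2) by (simp add: field_simps)
  qed
  then show ?thesis unfolding tough_def by blast
qed

lemma simple_noncomplete_cutset:
  assumes "simple_graph V E" "\<not> complete_graph V E"
  shows "\<exists>S. cutset V E S"
proof -
  obtain a b where ab: "a \<in> V" "b \<in> V" "a \<noteq> b" "{a,b} \<notin> E"
    using assms(2) unfolding complete_graph_def by blast
  have fin: "finite V" using assms(1) unfolding simple_graph_def by blast
  have "cutset V E (V - {a,b}) \<and> card {a,b} \<le> num_components (del_verts_V V (V - {a,b})) (del_verts_E E (V - {a,b}))"
  proof (rule sep_cut[OF fin, where rr=b])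
    show "\<forall>x\<in>{a, b}. x \<noteq> b \<longrightarrow> (\<forall>z\<in>V - (V - {a, b}). z \<noteq> x \<longrightarrow> {x, z} \<notin> E)"
      using ab by auto
  qed (use ab in auto)
  then show ?thesis by blast
qed

lemma tough_greatest:
  assumes simple: "simple_graph V E" and nc: "\<not> complete_graph V E" and ex: "\<exists>t. tough V E t"
  shows "tough V E (GREATEST t. tough V E t) \<and> (\<forall>t. tough V E t \<longrightarrow> t \<le> (GREATEST t. tough V E t))"
proof -
  have fin: "finite V" using simple unfolding simple_graph_def by blast
  define F where "F = {S. cutset V E S}"
  define f where "f S = real (card S) / real (num_components (del_verts_V V S) (del_verts_E E S))" for S
  have finF: "finite F" unfolding F_def cutset_def
    by (rule finite_subset[of _ "Pow V"]) (use fin in auto)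
  have neF: "F \<noteq> {}" using simple_noncomplete_cutset[OF simple nc] unfolding F_def by blast
  define m where "m = Min (f ` F)"
  have char: "tough V E t \<longleftrightarrow> t > 0 \<and> t \<le> m" for t
  proof -
    have "t \<le> m \<longleftrightarrow> (\<forall>a\<in>f ` F. t \<le> a)" unfolding m_def
      using finF neF by (simp add: Min_ge_iff)
    then show ?thesis unfolding tough_char F_def f_def by auto
  qed
  obtain t0 where "tough V E t0" using ex by blast
  then have "m > 0" using char by fastforce
  then have tm: "tough V E m" using char by simp
  have g: "(GREATEST t. tough V E t) = m"
    by (rule Greatest_equality) (use tm char in auto)
  show ?thesis using g tm char by auto
qed

lemma toughness_eq_tough:
  assumes simple: "simple_graph V E" and eq: "toughness V E = ereal t" and tpos: "t > 0"
  shows "\<not> complete_graph V E \<and> tough V E t"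
proof -
  have nc: "\<not> complete_graph V E" using eq unfolding toughness_def by auto
  have ex: "\<exists>t. tough V E t"
  proof (rule ccontr)
    assume "\<not> (\<exists>t. tough V E t)"
    then have "toughness V E = 0" unfolding toughness_def
      by (simp only: if_not_P[OF nc] if_not_P if_False)
    then show False using eq tpos by simp
  qed
  then have "toughness V E = ereal (GREATEST t. tough V E t)" using nc unfolding toughness_def by simp
  then have "(GREATEST t. tough V E t) = t" using eq by simp
  then show ?thesis using tough_greatest[OF simple nc ex] nc by simp
qed

lemma toughness_less:
  assumes simple: "simple_graph V E" and less: "toughness V E < ereal t" and tpos: "t > 0"
  shows "\<exists>S. cutset V E S \<and>
    real (card S) < t * real (num_components (del_verts_V V S) (del_verts_E E S))"
proof -
  have nc: "\<not> complete_graph V E" using less unfolding toughness_def by auto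
  have nt: "\<not> tough V E t"
  proof
    assume tt: "tough V E t"
    then have ex: "\<exists>t. tough V E t" by blast
    have "t \<le> (GREATEST t. tough V E t)" using tough_greatest[OF simple nc ex] tt by blast
    moreover have "toughness V E = ereal (GREATEST t. tough V E t)" using nc ex unfolding toughness_def by simp
    ultimately show False using less by simp
  qed
  then obtain S where S: "cutset V E S"
    "\<not> real (num_components (del_verts_V V S) (del_verts_E E S)) \<le> real (card S) / t"
    using tpos unfolding tough_def by blast
  then have "real (card S) < t * real (num_components (del_verts_V V S) (del_verts_E E S))"
    using tpos by (simp add: field_simps)
  then show ?thesis using S by blast
qed



lemma F1:
  assumes "tough V E t" "cutset V E S"
  shows "t * real (num_components (del_verts_V V S) (del_verts_E E S)) \<le> real (card S)"
  using assms unfolding tough_def by (auto simp: field_simps)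

lemma pair_lemma:
  fixes V :: "'a set" and E :: "'a set set" and K I T :: "'a set" and t :: real and u x y :: 'a
  assumes simple: "simple_graph V E"
    and KIV: "K \<union> I = V" and KI: "K \<inter> I = {}"
    and clique: "\<forall>a\<in>K. \<forall>b\<in>K. a \<noteq> b \<longrightarrow> {a,b} \<in> E"
    and indep: "\<forall>a\<in>I. \<forall>b\<in>I. {a,b} \<notin> E"
    and tG: "tough V E t"
    and S2: "2 * t \<le> real (card V) - 2"
    and cT: "cutset V (E - {{x,y}}) T"
    and lT: "real (card T) < t * real (num_components (del_verts_V V T) (del_verts_E (E - {{x,y}}) T))"
    and u: "u \<in> I" "{u,x} \<in> E" "{u,y} \<in> E" and xy: "x \<noteq> y"
  shows "I \<inter> {w. {x,w} \<in> E} \<subseteq> {u} \<and> I \<inter> {w. {y,w} \<in> E} \<subseteq> {u} \<and> 2 \<le> card I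
         \<and> real (card K) - 1 < t * (1 + real (card I))"
proof -
  have fin: "finite V" and Esub: "\<And>e. e \<in> E \<Longrightarrow> e \<subseteq> V \<and> card e = 2"
    using simple unfolding simple_graph_def by auto
  have finK: "finite K" and finI: "finite I" using fin KIV by (auto intro: finite_subset)
  have tpos: "t > 0" using tG unfolding tough_def by simp
  have edgeV: "a \<in> V" "b \<in> V" if "{a,b} \<in> E" for a b using Esub[OF that] by auto
  have xK: "x \<in> K" using edgeV[OF u(2)] u(1) indep KIV u(2) by blast
  have yK: "y \<in> K" using edgeV[OF u(3)] u(1) indep KIV u(3) by blast
  have exy: "{x,y} \<in> E" using clique xK yK xy by blast
  let ?E2 = "del_verts_E (E - {{x,y}}) T"
  have TV: "T \<subseteq> V" using cT unfolding cutset_def by blast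
  have ncon: "\<not> connected_graph (V - T) ?E2" using cT unfolding cutset_def del_verts_V_def by blast
  have contra: False if eqc: "num_components (V - T) (del_verts_E E T) = num_components (V - T) ?E2"
  proof -
    have "cutset V E T" using TV ncon eqc unfolding cutset_def connected_graph_def del_verts_V_def by simp
    from F1[OF tG this] lT eqc show False unfolding del_verts_V_def by simp
  qed
  have xT: "x \<notin> T"
  proof
    assume "x \<in> T"
    then have "del_verts_E E T = ?E2" unfolding del_verts_E_def by auto
    then show False using contra by simp
  qed
  have yT: "y \<notin> T"
  proof
    assume "y \<in> T"
    then have "del_verts_E E T = ?E2" unfolding del_verts_E_def by auto
    then show False using contra by simp
  qed
  have nocommon: "\<not> ({x,w} \<in> E \<and> {w,y} \<in> E)" if w: "w \<in> V - T" "w \<noteq> x" "w \<noteq> y" for w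
  proof
    assume h: "{x,w} \<in> E \<and> {w,y} \<in> E"
    have e1: "{x,w} \<in> ?E2" using h w xT unfolding del_verts_E_def by (auto simp: doubleton_eq_iff)
    have e2: "{w,y} \<in> ?E2" using h w yT unfolding del_verts_E_def by (auto simp: doubleton_eq_iff)
    have xV: "x \<in> V - T" "y \<in> V - T" using xK yK KIV xT yT by auto
    have "reachable (V - T) ?E2 x y"
      using reach_trans[OF reach_edge[OF xV(1) w(1) e1] reach_edge[OF w(1) xV(2) e2]] .
    then have "num_components (V - T) (insert {x,y} ?E2) = num_components (V - T) ?E2"
      by (rule edge_same)
    moreover have "insert {x,y} ?E2 = del_verts_E E T"
      using exy xT yT unfolding del_verts_E_def by auto
    ultimately show False using contra by simp
  qed
  define B where "B = {w\<in>I. {x,w} \<in> E \<and> {y,w} \<in> E}"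
  define X where "X = {w\<in>I. {x,w} \<in> E \<and> {y,w} \<notin> E}"
  define Y where "Y = {w\<in>I. {x,w} \<notin> E \<and> {y,w} \<in> E}"
  define Z where "Z = {w\<in>I. {x,w} \<notin> E \<and> {y,w} \<notin> E}"
  define Z' where "Z' = Z - T"
  have KT: "K - {x,y} \<subseteq> T"
  proof
    fix w assume w: "w \<in> K - {x,y}"
    show "w \<in> T"
    proof (rule ccontr)
      assume "w \<notin> T"
      then have "w \<in> V - T" using w KIV by auto
      moreover have "{x,w} \<in> E \<and> {w,y} \<in> E" using clique w xK yK by auto
      ultimately show False using nocommon w by blast
    qed
  qed
  have BT: "B \<subseteq> T"
  proof
    fix w assume w: "w \<in> B"
    show "w \<in> T"
    proof (rule ccontr)
      assume "w \<notin> T"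
      then have "w \<in> V - T" using w KIV unfolding B_def by auto
      moreover have "w \<noteq> x" "w \<noteq> y" using w xK yK KI unfolding B_def by auto
      moreover have "{x,w} \<in> E \<and> {w,y} \<in> E" using w unfolding B_def by (auto simp: insert_commute)
      ultimately show False using nocommon by blast
    qed
  qed
  have uB: "u \<in> B" using u unfolding B_def by (auto simp: insert_commute)
  have up: "num_components (V - T) ?E2 \<le> card ({x,y} \<union> Z')"
  proof (rule comp_upper)
    show "finite ({x,y} \<union> Z')" using finI unfolding Z'_def Z_def by auto
    show "\<forall>v\<in>V - T. \<exists>a\<in>{x, y} \<union> Z'. reachable (V - T) ?E2 v a"
    proof
      fix v assume v: "v \<in> V - T"
      show "\<exists>a\<in>{x, y} \<union> Z'. reachable (V - T) ?E2 v a"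
      proof (cases "v \<in> K")
        case True
        then have "v \<in> {x,y}" using KT v by blast
        then show ?thesis using reach_refl[OF v] by blast
      next
        case False
        then have vI: "v \<in> I" using v KIV by blast
        have vne: "v \<noteq> x" "v \<noteq> y" using vI xK yK KI by auto
        have xV: "x \<in> V - T" "y \<in> V - T" using xK yK KIV xT yT by auto
        show ?thesis
        proof (cases "{x,v} \<in> E")
          case True
          then have "{v,x} \<in> ?E2" using v xT vne unfolding del_verts_E_def
            by (auto simp: doubleton_eq_iff insert_commute)
          then show ?thesis using reach_edge[OF v xV(1)] by blast
        next
          case False
          show ?thesis
          proof (cases "{y,v} \<in> E")
            case True
            then have "{v,y} \<in> ?E2" using v yT vne unfolding del_verts_E_def
              by (auto simp: doubleton_eq_iff insert_commute)
            then show ?thesis using reach_edge[OF v xV(2)] by blast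
          next
            case False2: False
            then have "v \<in> Z'" using False vI v unfolding Z'_def Z_def by auto
            then show ?thesis using reach_refl[OF v] by blast
          qed
        qed
      qed
    qed
  qed
  have "card ({x,y} \<union> Z') \<le> card {x,y} + card Z'" by (rule card_Un_le)
  also have "\<dots> \<le> 2 + card Z'" by (simp add: card_insert_le_m1)
  finally have up2: "num_components (V - T) ?E2 \<le> 2 + card Z'" using up by linarith
  have Tup: "real (card T) < t * (2 + real (card Z'))"
  proof -
    have "t * real (num_components (V - T) ?E2) \<le> t * (2 + real (card Z'))"
      using up2 tpos by (intro mult_left_mono) auto
    then show ?thesis using lT unfolding del_verts_V_def by linarith
  qed
  have finT: "finite T" using TV fin by (rule finite_subset)
  have ZT: "Z \<inter> T \<subseteq> T" by blast
  have "card ((K - {x,y}) \<union> B \<union> (Z \<inter> T)) = card (K - {x,y}) + card B + card (Z \<inter> T)"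
  proof -
    have d1: "(K - {x,y}) \<inter> B = {}" "((K - {x,y}) \<union> B) \<inter> (Z \<inter> T) = {}"
      using KI unfolding B_def Z_def by auto
    have f: "finite (K - {x,y})" "finite B" "finite (Z \<inter> T)"
      using finK finI unfolding B_def Z_def by auto
    show ?thesis using card_Un_disjoint[OF _ _ d1(1)] card_Un_disjoint[OF _ _ d1(2)] f by simp
  qed
  moreover have "card ((K - {x,y}) \<union> B \<union> (Z \<inter> T)) \<le> card T"
    using KT BT finT by (intro card_mono) auto
  moreover have "card (K - {x,y}) = card K - 2" using xK yK xy finK by simp
  moreover have "card K \<ge> 2"
  proof -
    have "{x,y} \<subseteq> K" using xK yK by auto
    then have "card {x,y} \<le> card K" using finK by (rule card_mono[rotated])
    then show ?thesis using xy by simp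
  qed
  ultimately have Tlow: "real (card K) - 2 + real (card B) + real (card (Z \<inter> T)) \<le> real (card T)"
    by linarith
  have cZ: "card Z = card Z' + card (Z \<inter> T)"
  proof -
    have "Z = Z' \<union> (Z \<inter> T)" "Z' \<inter> (Z \<inter> T) = {}" unfolding Z'_def by auto
    moreover have "finite Z'" "finite (Z \<inter> T)" using finI unfolding Z'_def Z_def by auto
    ultimately show ?thesis by (metis card_Un_disjoint)
  qed
  have cI: "card I = card B + card X + card Y + card Z"
  proof -
    have "I = B \<union> X \<union> Y \<union> Z" unfolding B_def X_def Y_def Z_def by auto
    moreover have "B \<inter> X = {}" "(B \<union> X) \<inter> Y = {}" "(B \<union> X \<union> Y) \<inter> Z = {}"
      unfolding B_def X_def Y_def Z_def by auto
    moreover have "finite B" "finite X" "finite Y" "finite Z"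
      using finI unfolding B_def X_def Y_def Z_def by auto
    ultimately show ?thesis by (simp add: card_Un_disjoint)
  qed
  have cV: "card V = card K + card I" using KIV KI finK finI by (metis card_Un_disjoint)
  have bpos: "card B \<ge> 1"
  proof -
    have "finite B" using finI unfolding B_def by auto
    then show ?thesis using uB by (metis One_nat_def Suc_leI card_gt_0_iff empty_iff)
  qed
  have S1: "t * (1 + real (card X) + real (card Z)) \<le> real (card K) - 1" if ne: "X \<union> Z \<noteq> {}"
  proof -
    let ?R = "insert y (X \<union> Z)"
    have fXZ: "finite X" "finite Z" using finI unfolding X_def Z_def by auto
    have yn: "y \<notin> X \<union> Z" using yK KI unfolding X_def Z_def by auto
    have cR: "card ?R = 1 + card X + card Z"
    proof -
      have "X \<inter> Z = {}" unfolding X_def Z_def by auto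
      then have "card (X \<union> Z) = card X + card Z" using fXZ by (simp add: card_Un_disjoint)
      then show ?thesis using yn fXZ by simp
    qed
    have "card (X \<union> Z) \<ge> 1" using ne fXZ by (metis One_nat_def Suc_leI card_gt_0_iff finite_UnI)
    then have c2: "2 \<le> card ?R" using yn fXZ by simp
    have "t * real (card ?R) \<le> real (card (K - {y}))"
    proof (rule sep_bound[OF tG fin _ _ c2, where rr=y])
      show "K - {y} \<subseteq> V" using KIV by auto
      show "?R \<subseteq> V - (K - {y})" using yK KIV KI unfolding X_def Z_def by auto
      show "\<forall>a\<in>?R. a \<noteq> y \<longrightarrow> (\<forall>z\<in>V - (K - {y}). z \<noteq> a \<longrightarrow> {a, z} \<notin> E)"
      proof (intro ballI impI)
        fix a z assume a: "a \<in> ?R" "a \<noteq> y" and z: "z \<in> V - (K - {y})" "z \<noteq> a"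
        have aI: "a \<in> I" and ay: "{y,a} \<notin> E" using a unfolding X_def Z_def by auto
        show "{a,z} \<notin> E"
        proof (cases "z = y")
          case True then show ?thesis using ay by (simp add: insert_commute)
        next
          case False
          then have "z \<in> I" using z KIV by auto
          then show ?thesis using indep aI by blast
        qed
      qed
    qed
    moreover have "card K \<ge> 1" using yK finK by (metis One_nat_def Suc_leI card_gt_0_iff empty_iff)
    then have "real (card (K - {y})) = real (card K) - 1" using yK finK by (simp add: of_nat_diff)
    ultimately show ?thesis using cR by (simp add: algebra_simps)
  qed
  have S1': "t * (1 + real (card Y) + real (card Z)) \<le> real (card K) - 1" if ne: "Y \<union> Z \<noteq> {}"
  proof -
    let ?R = "insert x (Y \<union> Z)"
    have fXZ: "finite Y" "finite Z" using finI unfolding Y_def Z_def by auto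
    have yn: "x \<notin> Y \<union> Z" using xK KI unfolding Y_def Z_def by auto
    have cR: "card ?R = 1 + card Y + card Z"
    proof -
      have "Y \<inter> Z = {}" unfolding Y_def Z_def by auto
      then have "card (Y \<union> Z) = card Y + card Z" using fXZ by (simp add: card_Un_disjoint)
      then show ?thesis using yn fXZ by simp
    qed
    have "card (Y \<union> Z) \<ge> 1" using ne fXZ by (metis One_nat_def Suc_leI card_gt_0_iff finite_UnI)
    then have c2: "2 \<le> card ?R" using yn fXZ by simp
    have "t * real (card ?R) \<le> real (card (K - {x}))"
    proof (rule sep_bound[OF tG fin _ _ c2, where rr=x])
      show "K - {x} \<subseteq> V" using KIV by auto
      show "?R \<subseteq> V - (K - {x})" using xK KIV KI unfolding Y_def Z_def by auto
      show "\<forall>a\<in>?R. a \<noteq> x \<longrightarrow> (\<forall>z\<in>V - (K - {x}). z \<noteq> a \<longrightarrow> {a, z} \<notin> E)"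
      proof (intro ballI impI)
        fix a z assume a: "a \<in> ?R" "a \<noteq> x" and z: "z \<in> V - (K - {x})" "z \<noteq> a"
        have aI: "a \<in> I" and ay: "{x,a} \<notin> E" using a unfolding Y_def Z_def by auto
        show "{a,z} \<notin> E"
        proof (cases "z = x")
          case True then show ?thesis using ay by (simp add: insert_commute)
        next
          case False
          then have "z \<in> I" using z KIV by auto
          then show ?thesis using indep aI by blast
        qed
      qed
    qed
    moreover have "card K \<ge> 1" using xK finK by (metis One_nat_def Suc_leI card_gt_0_iff empty_iff)
    then have "real (card (K - {x})) = real (card K) - 1" using xK finK by (simp add: of_nat_diff)
    ultimately show ?thesis using cR by (simp add: algebra_simps)
  qed
  have S3: "t * real (card I) \<le> real (card K)" if c2: "2 \<le> card I"
  proof (rule sep_bound[OF tG fin _ _ c2, where rr=u])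
    show "K \<subseteq> V" using KIV by auto
    show "I \<subseteq> V - K" using KIV KI by auto
    show "\<forall>a\<in>I. a \<noteq> u \<longrightarrow> (\<forall>z\<in>V - K. z \<noteq> a \<longrightarrow> {a, z} \<notin> E)"
      using indep KIV by blast
  qed
  have mono: "t * real n \<ge> t * real m" if "n \<ge> m" for n m :: nat
    using that tpos by (intro mult_left_mono) auto
  have zne: "Z \<noteq> {}"
  proof
    assume Z0: "Z = {}"
    then have z0: "card Z = 0" "card Z' = 0" "card (Z \<inter> T) = 0" unfolding Z'_def by auto
    have k1: "real (card K) - 1 < 2 * t" using Tup Tlow z0 bpos by simp
    have X0: "X = {}"
    proof (rule ccontr)
      assume ne: "X \<noteq> {}"
      then have "card X \<ge> 1" using finI unfolding X_def by (simp add: Suc_leI card_gt_0_iff)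
      then have "t * real (card X) \<ge> t * real (1::nat)" by (rule mono)
      moreover have "t * (1 + real (card X) + real (card Z)) \<le> real (card K) - 1" using S1 ne by blast
      ultimately show False using k1 z0 by (simp add: algebra_simps)
    qed
    have Y0: "Y = {}"
    proof (rule ccontr)
      assume ne: "Y \<noteq> {}"
      then have "card Y \<ge> 1" using finI unfolding Y_def by (simp add: Suc_leI card_gt_0_iff)
      then have "t * real (card Y) \<ge> t * real (1::nat)" by (rule mono)
      moreover have "t * (1 + real (card Y) + real (card Z)) \<le> real (card K) - 1" using S1' ne by blast
      ultimately show False using k1 z0 by (simp add: algebra_simps)
    qed
    have "real (card V) = real (card K) + real (card B)" using cV cI X0 Y0 Z0 by simp
    then show False using S2 Tup Tlow z0 by simp
  qed
  have zpos: "card Z \<ge> 1" using zne finI unfolding Z_def by (simp add: Suc_leI card_gt_0_iff)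
  have k2: "real (card K) - 1 + real (card (Z \<inter> T)) < t * (2 + real (card Z'))"
    using Tup Tlow bpos by simp
  have X0: "X = {}" and zt0: "card (Z \<inter> T) = 0"
  proof -
    have s1: "t * (1 + real (card X) + real (card Z)) \<le> real (card K) - 1" using S1 zne by blast
    have key: "t * real (card X) + t * real (card (Z \<inter> T)) + real (card (Z \<inter> T)) < t"
      using s1 k2 cZ by (simp add: algebra_simps)
    have tzt: "t * real (card (Z \<inter> T)) \<ge> 0" using tpos by simp
    have tx: "t * real (card X) \<ge> 0" using tpos by simp
    show "X = {}"
    proof (rule ccontr)
      assume ne: "X \<noteq> {}"
      then have "card X \<ge> 1" using finI unfolding X_def by (simp add: Suc_leI card_gt_0_iff)
      then have "t * real (card X) \<ge> t * real (1::nat)" by (rule mono)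
      then show False using key tzt by simp
    qed
    show "card (Z \<inter> T) = 0"
    proof (rule ccontr)
      assume "card (Z \<inter> T) \<noteq> 0"
      then have "card (Z \<inter> T) \<ge> 1" by simp
      then have "t * real (card (Z \<inter> T)) \<ge> t * real (1::nat)" by (rule mono)
      then show False using key tx by simp
    qed
  qed
  have Y0: "Y = {}"
  proof -
    have s1: "t * (1 + real (card Y) + real (card Z)) \<le> real (card K) - 1" using S1' zne by blast
    have key: "t * real (card Y) + t * real (card (Z \<inter> T)) + real (card (Z \<inter> T)) < t"
      using s1 k2 cZ by (simp add: algebra_simps)
    have tzt: "t * real (card (Z \<inter> T)) \<ge> 0" using tpos by simp
    show "Y = {}"
    proof (rule ccontr)
      assume ne: "Y \<noteq> {}"
      then have "card Y \<ge> 1" using finI unfolding Y_def by (simp add: Suc_leI card_gt_0_iff)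
      then have "t * real (card Y) \<ge> t * real (1::nat)" by (rule mono)
      then show False using key tzt by simp
    qed
  qed
  have cI2: "card I = card B + card Z" using cI X0 Y0 by simp
  have cI2': "card I \<ge> 2" using cI2 bpos zpos by simp
  have zz: "card Z' = card Z" using cZ zt0 by simp
  have b1: "card B = 1"
  proof (rule ccontr)
    assume "card B \<noteq> 1"
    then have "card B \<ge> 2" using bpos by simp
    then have tb: "t * real (card B) \<ge> t * real (2::nat)" by (rule mono)
    have "t * real (card I) \<le> real (card K)" using S3 cI2' by blast
    then have "t * real (card B) + t * real (card Z) \<le> real (card K)" using cI2 by (simp add: algebra_simps)
    moreover have "real (card K) - 2 + real (card B) < t * (2 + real (card Z))" using Tup Tlow zz by simp
    ultimately show False using tb \<open>card B \<ge> 2\<close> by (simp add: algebra_simps)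
  qed
  have Bu: "B = {u}" using b1 uB by (metis card_1_singletonE singletonD)
  have n1: "I \<inter> {w. {x,w} \<in> E} \<subseteq> {u}"
  proof
    fix w assume w: "w \<in> I \<inter> {w. {x,w} \<in> E}"
    then have "w \<in> B \<or> w \<in> X" unfolding B_def X_def by auto
    then show "w \<in> {u}" using Bu X0 by auto
  qed
  have n2: "I \<inter> {w. {y,w} \<in> E} \<subseteq> {u}"
  proof
    fix w assume w: "w \<in> I \<inter> {w. {y,w} \<in> E}"
    then have "w \<in> B \<or> w \<in> Y" unfolding B_def Y_def by auto
    then show "w \<in> {u}" using Bu Y0 by auto
  qed
  have "real (card K) - 1 < t * (1 + real (card I))"
    using Tup Tlow zz b1 cI2 by (simp add: algebra_simps)
  then show ?thesis using n1 n2 cI2' by blast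
qed



lemma other_elem:
  assumes "2 \<le> card A" shows "\<exists>y\<in>A. y \<noteq> x"
proof (rule ccontr)
  assume "\<not> (\<exists>y\<in>A. y \<noteq> x)"
  then have "A \<subseteq> {x}" by blast
  then have "card A \<le> card {x}" by (intro card_mono) auto
  then show False using assms by simp
qed

theorem mainTheorem8:
  fixes V :: "'a set" and E :: "'a set set" and t :: rat
  assumes "simple_graph V E"
    and "t > 0"
    and "split_graph V E"
    and "minimally_tough V E (real_of_rat t)"
  shows "\<exists>v\<in>V. int (degree E v) = \<lceil>2 * t\<rceil>"
proof (rule ccontr)
  assume H: "\<not> (\<exists>v\<in>V. int (degree E v) = \<lceil>2 * t\<rceil>)"
  note simple = assms(1)
  obtain K I where KIV: "K \<union> I = V" and KI: "K \<inter> I = {}"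
    and clique: "\<forall>a\<in>K. \<forall>b\<in>K. a \<noteq> b \<longrightarrow> {a,b} \<in> E"
    and indep: "\<forall>a\<in>I. \<forall>b\<in>I. {a,b} \<notin> E"
    using assms(3) unfolding split_graph_def by blast
  have fin: "finite V" and Esub: "\<And>e. e \<in> E \<Longrightarrow> e \<subseteq> V \<and> card e = 2"
    using simple unfolding simple_graph_def by auto
  have finK: "finite K" and finI: "finite I" using fin KIV by (auto intro: finite_subset)
  define tr where "tr = real_of_rat t"
  have tpos: "tr > 0" unfolding tr_def using assms(2) by simp
  have teq: "toughness V E = ereal tr" and tcrit: "\<forall>e\<in>E. toughness V (E - {e}) < ereal tr"
    using assms(4) unfolding minimally_tough_def tr_def by auto
  have nc: "\<not> complete_graph V E" and tG: "tough V E tr"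
    using toughness_eq_tough[OF simple teq tpos] by auto
  have crit: "\<exists>T. cutset V (E - {e}) T \<and>
      real (card T) < tr * real (num_components (del_verts_V V T) (del_verts_E (E - {e}) T))"
    if "e \<in> E" for e
  proof (rule toughness_less)
    show "simple_graph V (E - {e})" using simple unfolding simple_graph_def by auto
    show "toughness V (E - {e}) < ereal tr" using tcrit that by blast
  qed (rule tpos)
  have edgeV: "a \<in> V" "b \<in> V" if "{a,b} \<in> E" for a b using Esub[OF that] by auto
  have noloop: "{v} \<notin> E" for v using Esub by fastforce
  obtain a b where ab: "a \<in> V" "b \<in> V" "a \<noteq> b" "{a,b} \<notin> E"
    using nc unfolding complete_graph_def by blast
  have S2: "2 * tr \<le> real (card V) - 2"
  proof -
    have "tr * real (card {a,b}) \<le> real (card (V - {a,b}))"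
    proof (rule sep_bound[OF tG fin, where rr=b])
      show "\<forall>x\<in>{a, b}. x \<noteq> b \<longrightarrow> (\<forall>z\<in>V - (V - {a, b}). z \<noteq> x \<longrightarrow> {x, z} \<notin> E)"
        using ab by auto
    qed (use ab in auto)
    moreover have "card (V - {a,b}) = card V - 2" using ab fin by simp
    moreover have "card V \<ge> 2"
    proof -
      have "card {a,b} \<le> card V" using ab fin by (intro card_mono) auto
      then show ?thesis using ab by simp
    qed
    ultimately show ?thesis using ab by (simp add: of_nat_diff)
  qed
  define N where "N v = {w. {v,w} \<in> E}" for v
  have NV: "N v \<subseteq> V" for v unfolding N_def using edgeV by blast
  have finN: "finite (N v)" for v using NV fin by (rule finite_subset)
  have degN: "degree E v = card (N v)" for v unfolding degree_def N_def by simp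
  have degbound: "2 * tr \<le> real (degree E v)" if v: "v \<in> V" "z \<in> V" "z \<noteq> v" "{v,z} \<notin> E" for v z
  proof -
    have "tr * real (card {v,z}) \<le> real (card (N v))"
    proof (rule sep_bound[OF tG fin NV, where rr=z])
      show "{v, z} \<subseteq> V - N v" using v noloop unfolding N_def by auto
      show "2 \<le> card {v, z}" using v by simp
      show "\<forall>x\<in>{v, z}. x \<noteq> z \<longrightarrow> (\<forall>za\<in>V - N v. za \<noteq> x \<longrightarrow> {x, za} \<notin> E)"
        unfolding N_def by auto
    qed
    then show ?thesis using v degN by simp
  qed
  have deg2: "degree E v \<ge> 2" if v: "v \<in> V" for v
  proof (rule ccontr)
    assume "\<not> degree E v \<ge> 2"
    then have d1: "card (N v) \<le> 1" using degN by simp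
    have "\<exists>z\<in>V. z \<noteq> v \<and> {v,z} \<notin> E"
    proof (rule ccontr)
      assume "\<not> (\<exists>z\<in>V. z \<noteq> v \<and> {v,z} \<notin> E)"
      then have all: "\<forall>z\<in>V. z \<noteq> v \<longrightarrow> {v,z} \<in> E" by blast
      show False
      proof (cases "a = v")
        case True then show ?thesis using all ab by auto
      next
        case False
        show ?thesis
        proof (cases "b = v")
          case True then show ?thesis using all ab by (auto simp: insert_commute)
        next
          case False2: False
          have "{a,b} \<subseteq> N v" using all ab False False2 unfolding N_def by auto
          then have "card {a,b} \<le> card (N v)" using finN by (intro card_mono) auto
          then show ?thesis using ab d1 by simp
        qed
      qed
    qed
    then obtain z where z: "z \<in> V" "z \<noteq> v" "{v,z} \<notin> E" by blast
    have db: "2 * tr \<le> real (degree E v)" using degbound[OF v z] .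
    then have "degree E v \<noteq> 0" using tpos by auto
    then have dv1: "degree E v = 1" using d1 degN by simp
    then have "2 * tr \<le> 1" using db by simp
    then have "real_of_rat (2 * t) \<le> real_of_rat 1" unfolding tr_def by (simp add: of_rat_mult)
    then have "2 * t \<le> 1" by (simp only: of_rat_less_eq)
    then have "\<lceil>2 * t\<rceil> = 1" using assms(2) by (intro ceiling_unique) auto
    then show False using H v dv1 by simp
  qed
  obtain u where uI: "u \<in> I"
  proof -
    have "\<not> (a \<in> K \<and> b \<in> K)" using clique ab by blast
    then show ?thesis using that ab KIV by blast
  qed
  have NuK: "N u \<subseteq> K" using NV uI indep KIV unfolding N_def by blast
  have d2: "card (N u) \<ge> 2" using deg2 uI KIV degN by fastforce
  have pair: "I \<inter> N x \<subseteq> {u} \<and> I \<inter> N y \<subseteq> {u} \<and> 2 \<le> card I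
         \<and> real (card K) - 1 < tr * (1 + real (card I))"
    if xy: "x \<in> N u" "y \<in> N u" "x \<noteq> y" for x y
  proof -
    have exy: "{x,y} \<in> E" using clique xy NuK by blast
    obtain T where T: "cutset V (E - {{x,y}}) T"
      "real (card T) < tr * real (num_components (del_verts_V V T) (del_verts_E (E - {{x,y}}) T))"
      using crit[OF exy] by blast
    have "I \<inter> {w. {x,w} \<in> E} \<subseteq> {u} \<and> I \<inter> {w. {y,w} \<in> E} \<subseteq> {u} \<and> 2 \<le> card I
         \<and> real (card K) - 1 < tr * (1 + real (card I))"
      by (rule pair_lemma[OF simple KIV KI clique indep tG S2 T uI _ _ xy(3)])
         (use xy in \<open>auto simp: N_def\<close>)
    then show ?thesis unfolding N_def by simp
  qed
  obtain x0 where x0: "x0 \<in> N u" using d2 by (metis card.empty not_numeral_le_zero all_not_in_conv)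
  obtain y0 where y0: "y0 \<in> N u" "y0 \<noteq> x0" using other_elem[OF d2] by blast
  have p0: "2 \<le> card I" "real (card K) - 1 < tr * (1 + real (card I))"
    using pair[OF x0 y0(1) y0(2)[symmetric]] by auto
  have allN: "I \<inter> N x \<subseteq> {u}" if x: "x \<in> N u" for x
  proof -
    obtain y where y: "y \<in> N u" "y \<noteq> x" using other_elem[OF d2] by blast
    show ?thesis using pair[OF x y(1) y(2)[symmetric]] by blast
  qed
  have S4: "tr * real (card I) \<le> real (card (K - N u))"
  proof (rule sep_bound[OF tG fin _ _ p0(1), where rr=u])
    show "K - N u \<subseteq> V" using KIV by auto
    show "I \<subseteq> V - (K - N u)" using KIV KI by auto
    show "\<forall>a\<in>I. a \<noteq> u \<longrightarrow> (\<forall>z\<in>V - (K - N u). z \<noteq> a \<longrightarrow> {a, z} \<notin> E)"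
    proof (intro ballI impI)
      fix a z assume a: "a \<in> I" "a \<noteq> u" and z: "z \<in> V - (K - N u)" "z \<noteq> a"
      show "{a,z} \<notin> E"
      proof
        assume az: "{a,z} \<in> E"
        show False
        proof (cases "z \<in> I")
          case True then show ?thesis using indep a az by blast
        next
          case False
          then have "z \<in> N u" using z KIV by auto
          moreover have "a \<in> N z" using az unfolding N_def by (simp add: insert_commute)
          ultimately show False using allN a by blast
        qed
      qed
    qed
  qed
  have cW: "real (card (K - N u)) = real (card K) - real (card (N u))"
    using NuK finK by (simp add: card_Diff_subset finN of_nat_diff card_mono)
  obtain w where w: "w \<in> I" "w \<noteq> u" using other_elem[OF p0(1)] by blast
  have du: "2 * tr \<le> real (card (N u))"
    using degbound[of u w] uI w indep KIV degN by auto
  have "real (card (N u)) - 1 < tr" using S4 cW p0(2) by (simp add: algebra_simps)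
  then show False using du d2 by linarith
qed

end
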